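(* Let $k\ge 2$ and $N\ge 1$ be integers such that neither $N<k$ nor $k\mid N$. Suppose there exist positive integers $A,B$ such that $(A)_k$ and $(B)_k$ are palindromes and $A/B=N$. Then, for the smallest such $A$, $$|(A)_k| \le 2\left(\lceil \log_k N\rceil + k^{\lceil \log_k N\rceil}\, N^2 + \left\lceil \frac{\log_k N}{2}\right\rceil\right)+1.$$
   Context: For an integer $n\ge1$ and base $k\ge 2$, $(n)_k$ denotes the base-$k$ representation of $n$ (most significant digit first, no leading zeros), and $|(n)_k|$ its length (number of digits). A string is a palindrome if it reads the same forwards and backwards. *)

theory Defs
  imports Complex_Main
begin

fun digits_lsf :: "nat \<Rightarrow> nat \<Rightarrow> nat list" where
  "digits_lsf k n = (if k < 2 \<or> n = 0 then [] else n mod k # digits_lsf k (n div k))"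

definition base_rep :: "nat \<Rightarrow> nat \<Rightarrow> nat list" where
  "base_rep k n = rev (digits_lsf k n)"

definition palindrome :: "'a list \<Rightarrow> bool" where
  "palindrome xs \<longleftrightarrow> rev xs = xs"

end

theory Submission
  imports Defs
begin


lemma dl_simp: "k \<ge> 2 \<Longrightarrow> x > 0 \<Longrightarrow> digits_lsf k x = x mod k # digits_lsf k (x div k)"
  by simp

lemma dl_zero[simp]: "digits_lsf k 0 = []" by simp

declare digits_lsf.simps[simp del]

lemma dl_nth: "k \<ge> 2 \<Longrightarrow> i < length (digits_lsf k x) \<Longrightarrow> digits_lsf k x ! i = x div k^i mod k"
proof (induction i arbitrary: x)
  case 0
  then have "x > 0" by (cases "x = 0") auto
  then show ?case using 0 by (simp add: dl_simp)
next
  case (Suc i)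
  then have "x > 0" by (cases "x = 0") auto
  then have "digits_lsf k x = x mod k # digits_lsf k (x div k)" using Suc by (simp add: dl_simp)
  then show ?case using Suc by (simp add: div_mult2_eq)
qed

lemma dl_upper: "k \<ge> 2 \<Longrightarrow> x < k ^ length (digits_lsf k x)"
proof (induction x rule: less_induct)
  case (less x)
  show ?case
  proof (cases "x = 0")
    case True then show ?thesis by simp
  next
    case False
    then have e: "digits_lsf k x = x mod k # digits_lsf k (x div k)" using less by (simp add: dl_simp)
    have "x div k < x" using False less by simp
    then have "x div k < k ^ length (digits_lsf k (x div k))" using less by blast
    then have "x div k + 1 \<le> k ^ length (digits_lsf k (x div k))" by simp
    moreover have "x < k * (x div k + 1)" using less
      by (metis add.commute add_mult_distrib2 div_mod_decomp mod_less_divisor mult.commute mult_1_right nat_add_left_cancel_less order_less_le_trans order.strict_trans2 less_2_cases_iff not_less zero_less_iff_neq_zero) 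
    ultimately have "x < k * k ^ length (digits_lsf k (x div k))"
      by (meson less_le_trans mult_le_mono2)
    then show ?thesis using e by simp
  qed
qed

lemma dl_lower: "k \<ge> 2 \<Longrightarrow> x > 0 \<Longrightarrow> k ^ (length (digits_lsf k x) - 1) \<le> x"
proof (induction x rule: less_induct)
  case (less x)
  then have e: "digits_lsf k x = x mod k # digits_lsf k (x div k)" by (simp add: dl_simp)
  show ?case
  proof (cases "x div k = 0")
    case True then show ?thesis using e less by simp
  next
    case False
    have "x div k < x" using less by simp
    then have "k ^ (length (digits_lsf k (x div k)) - 1) \<le> x div k" using less False by blast
    then have "k * k ^ (length (digits_lsf k (x div k)) - 1) \<le> k * (x div k)" by simp
    also have "\<dots> \<le> x" by simp
    finally have "k * k ^ (length (digits_lsf k (x div k)) - 1) \<le> x" .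
    moreover have "length (digits_lsf k (x div k)) > 0" using False less by (simp add: dl_simp)
    ultimately show ?thesis using e by (cases "length (digits_lsf k (x div k))") auto
  qed
qed

lemma dl_build: "k \<ge> 2 \<Longrightarrow> (\<forall>p<n. a p < k) \<Longrightarrow> n \<ge> 1 \<Longrightarrow> a (n-1) \<noteq> 0 \<Longrightarrow>
   digits_lsf k (\<Sum>p<n. a p * k^p) = map a [0..<n]"
proof (induction n arbitrary: a)
  case 0 then show ?case by simp
next
  case (Suc n)
  show ?case
  proof (cases "n = 0")
    case True
    then have "a 0 < k" "a 0 \<noteq> 0" using Suc.prems by auto
    then have "digits_lsf k (a 0) = [a 0]" using dl_simp[of k "a 0"] Suc.prems by simp
    then show ?thesis using True by simp
  next
    case False
    have s: "(\<Sum>p<Suc n. a p * k^p) = a 0 + k * (\<Sum>p<n. a (Suc p) * k^p)"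
      proof -
      have "(\<Sum>p<Suc n. a p * k^p) = a 0 * k^0 + (\<Sum>p<n. a (Suc p) * k^(Suc p))" by (rule sum.lessThan_Suc_shift)
      also have "(\<Sum>p<n. a (Suc p) * k^(Suc p)) = k * (\<Sum>p<n. a (Suc p) * k^p)"
        by (simp add: sum_distrib_left) (simp add: algebra_simps)
      finally show ?thesis by simp
    qed
    have ih: "digits_lsf k (\<Sum>p<n. a (Suc p) * k^p) = map (\<lambda>p. a (Suc p)) [0..<n]"
      using Suc.IH[of "\<lambda>p. a (Suc p)"] Suc.prems False by simp
    have nz: "(\<Sum>p<n. a (Suc p) * k^p) \<noteq> 0"
      proof
      assume "(\<Sum>p<n. a (Suc p) * k^p) = 0"
      then have "map (\<lambda>p. a (Suc p)) [0..<n] = digits_lsf k 0" using ih by metis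
      then have "map (\<lambda>p. a (Suc p)) [0..<n] = []" by simp
      then show False using False by simp
    qed
    have "a 0 < k" using Suc.prems by auto
    then have m: "(a 0 + k * (\<Sum>p<n. a (Suc p) * k^p)) mod k = a 0" 
          "(a 0 + k * (\<Sum>p<n. a (Suc p) * k^p)) div k = (\<Sum>p<n. a (Suc p) * k^p)" using Suc.prems by auto
    have "digits_lsf k (\<Sum>p<Suc n. a p * k^p) = a 0 # map (\<lambda>p. a (Suc p)) [0..<n]"
      proof -
      have "digits_lsf k (a 0 + k * (\<Sum>p<n. a (Suc p) * k^p)) = (a 0 + k * (\<Sum>p<n. a (Suc p) * k^p)) mod k # digits_lsf k ((a 0 + k * (\<Sum>p<n. a (Suc p) * k^p)) div k)"
        using dl_simp[of k "a 0 + k * (\<Sum>p<n. a (Suc p) * k^p)"] nz Suc.prems by fastforce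
      then show ?thesis unfolding s m ih .
    qed
    also have "\<dots> = map a [0..<Suc n]" by (simp add: upt_conv_Cons map_Suc_upt[symmetric] del: upt_Suc)
    finally show ?thesis .
  qed
qed


lemma carry_sum: fixes a b c :: "nat \<Rightarrow> nat" and k N n :: nat shows "(\<forall>p<n. a p + k * c (Suc p) = N * b p + c p) \<Longrightarrow> c 0 = 0 \<Longrightarrow>
   (\<Sum>p<n. a p * k^p) + c n * k^n = N * (\<Sum>p<n. b p * k^p)"
proof (induction n)
  case 0 then show ?case by simp
next
  case (Suc n)
  have ih: "(\<Sum>p<n. a p * k^p) + c n * k^n = N * (\<Sum>p<n. b p * k^p)" using Suc by auto
  have e: "a n + k * c (Suc n) = N * b n + c n" using Suc.prems by auto
  have "a n * k^n + c (Suc n) * k^(Suc n) = (a n + k * c (Suc n)) * k^n" by (simp add: algebra_simps)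
  also have "\<dots> = N * b n * k^n + c n * k^n" using e by (simp add: algebra_simps)
  finally have "a n * k^n + c (Suc n) * k^(Suc n) = N * b n * k^n + c n * k^n" .
  then show ?case using ih by (simp add: algebra_simps)
qed

lemma carry_eq:
  fixes k N A B p :: nat
  assumes k2: "k \<ge> 2" and AB: "A = N * B"
  shows "A div k^p mod k + k * (N * (B mod k^(Suc p)) div k^(Suc p)) = N * (B div k^p mod k) + N * (B mod k^p) div k^p"
proof -
  define X where "X = N * (B mod k^p)"
  define Y where "Y = N * (B mod k^(Suc p))"
  define q where "q = k^p"
  have qpos: "q > 0" using k2 unfolding q_def by simp
  have kq: "k^(Suc p) = q * k" unfolding q_def by (simp add: power_Suc2)
  have mB: "B mod k^(Suc p) = B mod q + q * (B div q mod k)" unfolding kq by (simp add: mod_mult2_eq)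
  have mA: "A mod k^(Suc p) = A mod q + q * (A div q mod k)" unfolding kq by (simp add: mod_mult2_eq)
  have AX: "A mod q = X mod q" unfolding X_def AB by (simp add: q_def mod_mult_right_eq)
  have AY: "A mod k^(Suc p) = Y mod k^(Suc p)" unfolding Y_def AB by (simp add: mod_mult_right_eq)
  have Y1: "Y = X + N * (B div q mod k) * q" unfolding Y_def X_def mB q_def by (simp add: algebra_simps)
  have Y2: "Y = Y mod k^(Suc p) + (Y div k^(Suc p)) * (q * k)" unfolding kq[symmetric] by (metis mod_div_mult_eq)
  have X2: "X = X mod q + (X div q) * q" by simp
  have "X + N * (B div q mod k) * q = A mod q + q * (A div q mod k) + (Y div k^(Suc p)) * (q * k)"
    using Y1 Y2 AY mA by linarith
  then have "(X div q) * q + N * (B div q mod k) * q = q * (A div q mod k) + (Y div k^(Suc p)) * (q * k)"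
    using AX X2 by linarith
  then have "q * ((X div q) + N * (B div q mod k)) = q * ((A div q mod k) + k * (Y div k^(Suc p)))"
    by (simp add: algebra_simps)
  then have "(X div q) + N * (B div q mod k) = (A div q mod k) + k * (Y div k^(Suc p))"
    using qpos by simp
  then show ?thesis unfolding X_def Y_def q_def by simp
qed

lemma sum_tail0: fixes f :: "nat \<Rightarrow> nat" and m n :: nat shows "m \<le> n \<Longrightarrow> (\<forall>p\<ge>m. f p = (0::nat)) \<Longrightarrow> sum f {..<n} = sum f {..<m}"
  by (induction n) (auto simp: le_Suc_eq)

lemma rev_map_upt: "rev (map f [0..<n]) = map f [0..<n] \<longleftrightarrow> (\<forall>i<n. f (n-1-i) = f i)"
proof -
  have "rev (map f [0..<n]) = map f [0..<n] \<longleftrightarrow> (\<forall>i<n. rev (map f [0..<n]) ! i = map f [0..<n] ! i)"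
    by (simp add: list_eq_iff_nth_eq)
  also have "\<dots> \<longleftrightarrow> (\<forall>i<n. f (n-1-i) = f i)"
    by (simp add: rev_nth)
  finally show ?thesis .
qed

lemma dl_map: "k \<ge> 2 \<Longrightarrow> digits_lsf k x = map (\<lambda>i. x div k^i mod k) [0..<length (digits_lsf k x)]"
  by (rule nth_equalityI) (simp_all add: dl_nth)



lemma pal_iff: "palindrome (base_rep k x) \<longleftrightarrow> rev (digits_lsf k x) = digits_lsf k x"
  unfolding palindrome_def base_rep_def by (metis rev_rev_ident)

lemma lead_nz: assumes "k \<ge> 2" "x > 0" shows "x div k^(length (digits_lsf k x) - 1) mod k \<noteq> 0"
proof -
  define n where "n = length (digits_lsf k x)"
  have "n \<ge> 1" using assms unfolding n_def by (simp add: dl_simp)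
  then have kn: "k^n = k^(n-1) * k" by (metis One_nat_def Suc_pred less_eq_Suc_le power_Suc2)
  have u: "x < k^n" using dl_upper assms unfolding n_def by blast
  have l: "k^(n-1) \<le> x" using dl_lower assms unfolding n_def by blast
  have "x div k^(n-1) < k" using u kn by (metis less_mult_imp_div_less mult.commute)
  moreover have "x div k^(n-1) \<ge> 1"
  proof -
    have "k^(n-1) div k^(n-1) \<le> x div k^(n-1)" using l by (rule div_le_mono)
    moreover have "k^(n-1) div k^(n-1) = 1" using assms by simp
    ultimately show ?thesis by linarith
  qed
  ultimately show ?thesis unfolding n_def[symmetric] by simp
qed

lemma len_unique: assumes "k \<ge> 2" "x < k^n" "k^(n-1) \<le> x" "x > 0" shows "length (digits_lsf k x) = n"
proof -
  define l where "l = length (digits_lsf k x)"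
  have u: "x < k^l" using dl_upper assms unfolding l_def by blast
  have lo: "k^(l-1) \<le> x" using dl_lower assms unfolding l_def by blast
  have k1: "1 < k" using assms by simp
  have "l - 1 < n" using lo assms(2) k1 by (meson le_less_trans power_less_imp_less_exp)
  moreover have "n - 1 < l" using u assms(3) k1 by (meson le_less_trans power_less_imp_less_exp)
  moreover have "l \<ge> 1" using assms unfolding l_def by (simp add: dl_simp)
  moreover have "n \<ge> 1" using assms by (cases n) auto
  ultimately show ?thesis unfolding l_def[symmetric] by linarith
qed


lemma shrink:
  fixes k N A B :: nat
  assumes k2: "k \<ge> 2" and Apos: "A > 0" and Bpos: "B > 0" and AB: "A = N * B"
    and palA: "palindrome (base_rep k A)" and palB: "palindrome (base_rep k B)"
    and big: "N * N * k ^ (length (digits_lsf k A) - length (digits_lsf k B)) < length (digits_lsf k B) div 2"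
  shows "\<exists>A' B'. 0 < A' \<and> A' < A \<and> 0 < B' \<and> A' = N * B' \<and> palindrome (base_rep k A') \<and> palindrome (base_rep k B')"
proof -
  define n where "n = length (digits_lsf k A)"
  define m where "m = length (digits_lsf k B)"
  define d where "d = n - m"
  have Npos: "N > 0" using Apos AB by simp
  have k1: "1 < k" using k2 by simp
  have uA: "A < k^n" using dl_upper k2 unfolding n_def by blast
  have lA: "k^(n-1) \<le> A" using dl_lower k2 Apos unfolding n_def by blast
  have uB: "B < k^m" using dl_upper k2 unfolding m_def by blast
  have lB: "k^(m-1) \<le> B" using dl_lower k2 Bpos unfolding m_def by blast
  have n1: "n \<ge> 1" using k2 Apos unfolding n_def by (simp add: dl_simp)
  have m1: "m \<ge> 1" using k2 Bpos unfolding m_def by (simp add: dl_simp)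
  have "B \<le> A" using AB Npos by simp
  then have "k^(m-1) < k^n" using lB uA by linarith
  then have "m - 1 < n" using k1 power_less_imp_less_exp by blast
  then have mn: "m \<le> n" by linarith
  define a where "a = (\<lambda>p. A div k^p mod k)"
  define b where "b = (\<lambda>p. B div k^p mod k)"
  define c where "c = (\<lambda>p. N * (B mod k^p) div k^p)"
  have a_lt: "\<And>p. a p < k" unfolding a_def using k2 by simp
  have b_lt: "\<And>p. b p < k" unfolding b_def using k2 by simp
  have c_lt: "\<And>p. c p < N"
  proof -
    fix p
    have "B mod k^p < k^p" using k2 by simp
    then have "N * (B mod k^p) < N * k^p" using Npos by simp
    then show "c p < N" unfolding c_def by (simp add: less_mult_imp_div_less)
  qed
  have b0: "\<And>q. q \<ge> m \<Longrightarrow> b q = 0"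
  proof -
    fix q assume "q \<ge> m"
    then have "k^m \<le> k^q" using k1 by simp
    then have "B div k^q = 0" using uB by simp
    then show "b q = 0" unfolding b_def by simp
  qed
  have eq: "\<And>p. a p + k * c (Suc p) = N * b p + c p"
    unfolding a_def b_def c_def using carry_eq[OF k2 AB] by blast
  have c0: "c 0 = 0" unfolding c_def by simp
  have cn: "c n = 0"
  proof -
    have "k^m \<le> k^n" using mn k1 by simp
    then have "B mod k^n = B" using uB by simp
    then show ?thesis unfolding c_def using uA AB by simp
  qed
  have an: "a (n-1) \<noteq> 0" unfolding a_def n_def using lead_nz[OF k2 Apos] .
  have bm: "b (m-1) \<noteq> 0" unfolding b_def m_def using lead_nz[OF k2 Bpos] .
  have dA: "digits_lsf k A = map a [0..<n]" unfolding a_def n_def using dl_map[OF k2] .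
  have dB: "digits_lsf k B = map b [0..<m]" unfolding b_def m_def using dl_map[OF k2] .
  have pa: "\<And>i. i < n \<Longrightarrow> a (n-1-i) = a i"
    using palA unfolding pal_iff dA rev_map_upt by blast
  have pb: "\<And>i. i < m \<Longrightarrow> b (m-1-i) = b i"
    using palB unfolding pal_iff dB rev_map_upt by blast
  define st where "st = (\<lambda>i. (c i, c (n-i), map (\<lambda>s. b (m-i+s)) [0..<d]))"
  define T where "T = {..<N} \<times> {..<N} \<times> {xs. set xs \<subseteq> {..<k} \<and> length xs = d}"
  have cardT: "card T = N * N * k^d" unfolding T_def
    by (simp add: card_cartesian_product card_lists_length_eq)
  have finT: "finite T" unfolding T_def by (simp add: finite_lists_length_eq)
  have stT: "st ` {1..m div 2} \<subseteq> T" unfolding st_def T_def using c_lt b_lt by auto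
  have "\<not> inj_on st {1..m div 2}"
  proof
    assume "inj_on st {1..m div 2}"
    then have "card (st ` {1..m div 2}) = m div 2" by (simp add: card_image)
    moreover have "card (st ` {1..m div 2}) \<le> card T" using stT finT by (rule card_mono[rotated])
    ultimately show False using big cardT unfolding d_def n_def m_def by linarith
  qed
  then obtain i0 j0 where ij0: "i0 \<in> {1..m div 2}" "j0 \<in> {1..m div 2}" "i0 \<noteq> j0" "st i0 = st j0"
    unfolding inj_on_def by blast
  define i where "i = min i0 j0"
  define j where "j = max i0 j0"
  have ij: "1 \<le> i" "i < j" "2 * j \<le> m" "st i = st j"
    using ij0 unfolding i_def j_def by (auto simp: min_def max_def)
  have ci: "c i = c j" and cni: "c (n-i) = c (n-j)" and wi: "\<And>s. s < d \<Longrightarrow> b (m-i+s) = b (m-j+s)"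
    using ij(4) unfolding st_def by (auto simp: list_eq_iff_nth_eq)
  define l where "l = j - i"
  define n' where "n' = n - 2*l"
  define m' where "m' = m - 2*l"
  have ar: "n' + 2*l = n" "m' + 2*l = m" "i + l = j" "l \<ge> 1" "n' - m' = d" "m' \<ge> 2*i" "m' \<le> n'"
    using ij mn unfolding n'_def m'_def l_def d_def by auto
  define fA where "fA = (\<lambda>p. if p < i then p else if p < n' - i then p + l else p + 2*l)"
  define fB where "fB = (\<lambda>p. if p < i then p else if p < m' - i then p + l else p + 2*l)"
  define a' where "a' = (\<lambda>p. a (fA p))"
  define b' where "b' = (\<lambda>p. b (fB p))"
  define c' where "c' = (\<lambda>p. c (fA p))"
  have eq': "\<forall>p<n'. a' p + k * c' (Suc p) = N * b' p + c' p"
  proof (intro allI impI)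
    fix p assume pn: "p < n'"
    have C: "c (fA (Suc p)) = c (Suc (fA p))"
    proof -
      consider "Suc p < i" | "Suc p = i" | "i < Suc p" "Suc p < n' - i" | "i < Suc p" "Suc p = n' - i" | "Suc p > n' - i" "i < Suc p"
        by linarith
      then show ?thesis
      proof cases
        case 1 then show ?thesis unfolding fA_def by simp
      next
        case 2
        show ?thesis
        proof (cases "i < n' - i")
          case True then show ?thesis unfolding fA_def using 2 ci ar by auto
        next
          case False
          then have "n = 2 * j" using ar by linarith
          have e1: "fA (Suc p) = n - i" unfolding fA_def using 2 False ar by auto
          have e2: "Suc (fA p) = i" unfolding fA_def using 2 by auto
          have "n - j = j" using \<open>n = 2 * j\<close> by simp
          then show ?thesis unfolding e1 e2 using ci cni by simp
        qed
      next
        case 3 then show ?thesis unfolding fA_def by auto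
      next
        case 4
        then have "fA (Suc p) = n - i" "Suc (fA p) = n - j" unfolding fA_def using ar by auto
        then show ?thesis using cni by simp
      next
        case 5 then show ?thesis unfolding fA_def by auto
      qed
    qed
    have Bq: "b (fB p) = b (fA p)"
    proof -
      consider "p < i" | "i \<le> p" "p < m' - i" | "m' - i \<le> p" "p < n' - i" | "n' - i \<le> p"
        by linarith
      then show ?thesis
      proof cases
        case 1 then show ?thesis unfolding fA_def fB_def by simp
      next
        case 2
        then have "p < n' - i" using ar by linarith
        then show ?thesis using 2 unfolding fA_def fB_def by auto
      next
        case 3
        define s where "s = p - (m' - i)"
        have sd: "s < d" using 3 ar unfolding s_def by linarith
        have "fB p = m - i + s" "fA p = m - j + s" unfolding fA_def fB_def s_def using 3 ar by auto
        then show ?thesis using wi[OF sd] by simp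
      next
        case 4
        then have "m' - i \<le> p" using ar by linarith
        then show ?thesis using 4 unfolding fA_def fB_def by auto
      qed
    qed
    show "a' p + k * c' (Suc p) = N * b' p + c' p"
      unfolding a'_def b'_def c'_def using eq[of "fA p"] C Bq by simp
  qed
  have c'0: "c' 0 = 0" unfolding c'_def fA_def using ij c0 by simp
  have c'n: "c' n' = 0" unfolding c'_def fA_def using ar cn by auto
  define A' where "A' = (\<Sum>p<n'. a' p * k^p)"
  define B' where "B' = (\<Sum>p<m'. b' p * k^p)"
  have b'0: "\<forall>p\<ge>m'. b' p = 0"
  proof (intro allI impI)
    fix p assume "m' \<le> p"
    then have "fB p \<ge> m" unfolding fB_def using ar by auto
    then show "b' p = 0" unfolding b'_def using b0 by simp
  qed
  have "A' + c' n' * k^n' = N * (\<Sum>p<n'. b' p * k^p)"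
    unfolding A'_def by (rule carry_sum[OF eq' c'0])
  also have "(\<Sum>p<n'. b' p * k^p) = B'" unfolding B'_def
    by (rule sum_tail0) (use ar b'0 in auto)
  finally have AB': "A' = N * B'" using c'n by simp
  have fAlast: "fA (n'-1) = n - 1" unfolding fA_def using ar ij by auto
  have fBlast: "fB (m'-1) = m - 1" unfolding fB_def using ar ij by auto
  have dA': "digits_lsf k A' = map a' [0..<n']" unfolding A'_def
    by (rule dl_build[OF k2]) (use a_lt ar ij an fAlast in \<open>auto simp: a'_def\<close>)
  have dB': "digits_lsf k B' = map b' [0..<m']" unfolding B'_def
    by (rule dl_build[OF k2]) (use b_lt ar ij bm fBlast in \<open>auto simp: b'_def\<close>)
  have fAn: "\<And>p. p < n' \<Longrightarrow> fA p < n" unfolding fA_def using ar by auto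
  have fBm: "\<And>p. p < m' \<Longrightarrow> fB p < m" unfolding fB_def using ar by auto
  have fAr: "\<And>p. p < n' \<Longrightarrow> fA (n'-1-p) = n - 1 - fA p" unfolding fA_def using ar ij by auto
  have fBr: "\<And>p. p < m' \<Longrightarrow> fB (m'-1-p) = m - 1 - fB p" unfolding fB_def using ar ij by auto
  have palA': "palindrome (base_rep k A')"
    unfolding pal_iff dA' rev_map_upt a'_def using fAr fAn pa by simp
  have palB': "palindrome (base_rep k B')"
    unfolding pal_iff dB' rev_map_upt b'_def using fBr fBm pb by simp
  have A'pos: "A' > 0"
  proof (rule ccontr)
    assume "\<not> A' > 0"
    then have "digits_lsf k A' = []" by simp
    then show False using dA' ar ij by simp
  qed
  have B'pos: "B' > 0"
  proof (rule ccontr)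
    assume "\<not> B' > 0"
    then have "digits_lsf k B' = []" by simp
    then show False using dB' ar ij by simp
  qed
  have "A' < k^n'" using dl_upper[OF k2, of A'] dA' by simp
  also have "k^n' \<le> k^(n-1)" using ar k1 by simp
  also have "\<dots> \<le> A" using lA .
  finally have "A' < A" .
  then show ?thesis using A'pos B'pos AB' palA' palB' by blast
qed


lemma N_le_pow: fixes k N :: nat assumes "k \<ge> 2" "N \<ge> 1" shows "N \<le> k ^ nat \<lceil>log (real k) (real N)\<rceil>"
proof -
  define L where "L = nat \<lceil>log (real k) (real N)\<rceil>"
  have lg: "log (real k) (real N) \<ge> 0" using assms by simp
  have rl: "real_of_int \<lceil>log (real k) (real N)\<rceil> = real L" using lg unfolding L_def by simp
  have "real N = real k powr log (real k) (real N)" using assms by simp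
  also have "\<dots> \<le> real k powr real_of_int \<lceil>log (real k) (real N)\<rceil>"
    using assms by (intro powr_mono) auto
  also have "\<dots> = real k powr real L" using rl by simp
  also have "real k powr real L = real k ^ L"
    by (rule powr_realpow) (use assms in simp)
  finally have "real N \<le> real (k ^ L)" by simp
  then show ?thesis unfolding L_def by linarith
qed

theorem theorem7:
  fixes k N :: nat
  assumes "k \<ge> 2" and "N \<ge> 1"
    and "\<not> N < k" and "\<not> k dvd N"
    and "\<exists>A B. A > 0 \<and> B > 0 \<and> palindrome (base_rep k A) \<and> palindrome (base_rep k B)
                 \<and> A = N * B"
  shows "int (length (base_rep k (LEAST A. A > 0 \<and> (\<exists>B. B > 0 \<and> palindrome (base_rep k A)
                 \<and> palindrome (base_rep k B) \<and> A = N * B))))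
         \<le> 2 * (\<lceil>log (real k) (real N)\<rceil>
                + int k ^ nat \<lceil>log (real k) (real N)\<rceil> * int N ^ 2
                + \<lceil>log (real k) (real N) / 2\<rceil>) + 1"
proof -
  define P where "P = (\<lambda>A. A > 0 \<and> (\<exists>B. B > 0 \<and> palindrome (base_rep k A)
                 \<and> palindrome (base_rep k B) \<and> A = N * B))"
  define A0 where "A0 = (LEAST A. P A)"
  have k2: "k \<ge> 2" using assms by simp
  have k1: "1 < k" using assms by simp
  have ex: "\<exists>A. P A" using assms(5) unfolding P_def by blast
  have PA0: "P A0" unfolding A0_def using ex by (rule LeastI_ex)
  then obtain B0 where B0: "A0 > 0" "B0 > 0" "palindrome (base_rep k A0)" "palindrome (base_rep k B0)" "A0 = N * B0"
    unfolding P_def by blast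
  define n where "n = length (digits_lsf k A0)"
  define m where "m = length (digits_lsf k B0)"
  define L where "L = nat \<lceil>log (real k) (real N)\<rceil>"
  have NL: "N \<le> k ^ L" unfolding L_def using N_le_pow assms by simp
  have small: "m div 2 \<le> N * N * k ^ (n - m)"
  proof (rule ccontr)
    assume "\<not> ?thesis"
    then have "N * N * k ^ (n - m) < m div 2" by simp
    then obtain A' B' where "0 < A'" "A' < A0" "0 < B'" "A' = N * B'" "palindrome (base_rep k A')" "palindrome (base_rep k B')"
      using shrink[OF k2 B0(1) B0(2) B0(5) B0(3) B0(4)] unfolding n_def m_def by blast
    then have "P A'" unfolding P_def by blast
    then have "A0 \<le> A'" unfolding A0_def by (rule Least_le)
    then show False using \<open>A' < A0\<close> by simp
  qed
  have uB: "B0 < k^m" using dl_upper k2 unfolding m_def by blast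
  have lA: "k^(n-1) \<le> A0" using dl_lower k2 B0(1) unfolding n_def by blast
  have "N * B0 \<le> k^L * B0" using NL by simp
  moreover have "k^L * B0 < k^L * k^m" using uB k1 by simp
  ultimately have "A0 < k^L * k^m" using B0(5) by linarith
  then have "k^(n-1) < k^(L+m)" using lA by (simp add: power_add)
  then have "n - 1 < L + m" using k1 power_less_imp_less_exp by blast
  then have nle: "n \<le> L + m" by linarith
  then have "n - m \<le> L" by linarith
  then have "k ^ (n - m) \<le> k ^ L" using k1 by simp
  then have "N * N * k ^ (n - m) \<le> N * N * k ^ L" by simp
  then have "m div 2 \<le> N * N * k ^ L" using small by linarith
  then have nb: "n \<le> L + 2 * (N * N * k ^ L) + 1" using nle by linarith
  have lg: "log (real k) (real N) \<ge> 0" using assms by simp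
  have C: "\<lceil>log (real k) (real N)\<rceil> = int L" unfolding L_def using lg by simp
  have D: "\<lceil>log (real k) (real N) / 2\<rceil> \<ge> 0" using lg by simp
  have E: "int (N * N * k ^ L) = int k ^ L * int N ^ 2" by (simp add: power2_eq_square)
  have len: "length (base_rep k A0) = n" unfolding base_rep_def n_def by simp
  have F: "x \<le> 2*(y+z+w)+1" if "x \<le> y + 2*z + 1" "0 \<le> w" "0 \<le> y" "0 \<le> z" for x y z w :: int
    using that by arith
  have nbi: "int n \<le> int L + 2 * int (N * N * k ^ L) + 1" using nb by linarith
  have "int (length (base_rep k A0)) \<le> 2 * (\<lceil>log (real k) (real N)\<rceil>
                + int k ^ nat \<lceil>log (real k) (real N)\<rceil> * int N ^ 2
                + \<lceil>log (real k) (real N) / 2\<rceil>) + 1"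
    unfolding len C nat_int by (rule F[OF nbi[unfolded E] D]) simp_all
  then show ?thesis unfolding A0_def P_def .
qed
end
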